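(* Let $\mathcal O$ be the suboperad of $\mathrm{CNCB}$ generated by $p:=T_{bbu}$ and $c:=T_{buu}$. Then $\mathcal O$ admits the presentation with generators $p,c$ of arity $2$ and relations $$(c\circ_2 p)\circ_2 c=(c\circ_1 c)\circ_2 p,\qquad (p\circ_2 p)\circ_2 c=(p\circ_1 c)\circ_2 p.$$ That is, $\mathcal O$ is isomorphic, via the morphism sending the generators to $p$ and $c$, to the quotient of the free operad on two binary generators by the operadic congruence generated by these two relations.
   Context: For $n\ge2$, a bicoloured noncrossing configuration (BNC) of size $n$ is a regular polygon with vertices $1,\dots,n+1$ clockwise, together with disjoint sets of blue and red arcs among the arcs $(i,j)$, $1\le i<j\le n+1$. The arcs $(i,i+1)$ are the edges ($i$th edge), $(1,n+1)$ is the base, and the others are diagonals. Coloured arcs are pairwise noncrossing ($(i,j),(k,l)$ cross iff $i<k<j<l$ or $k<i<l<j$), and red arcs are diagonals. There is one BNC of size $1$, a blue segment, which is the unit. The operad $\mathrm{CNCB}$ has the BNCs as elements (arity = size). Its composition $\mathfrak C\circ_i\mathfrak D$ ($\mathfrak C$ of size $n$, $\mathfrak D$ of size $m$) glues the base of $\mathfrak D$ on the $i$th edge of $\mathfrak C$. Arcs $(a,b)$ of $\mathfrak C$ become $(\sigma(a),\sigma(b))$ with $\sigma(v)=v$ for $v\le i$ and $v+m-1$ otherwise, and arcs $(a,b)$ of $\mathfrak D$ become $(a+i-1,b+i-1)$, keeping colours. The exception is the arc $(i,i+m)$, which is red if the $i$th edge of $\mathfrak C$ and the base of $\mathfrak D$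 are both uncoloured, blue if both are blue, and uncoloured otherwise. For $x,y,z\in\{b,u\}$, $T_{xyz}$ denotes the BNC of size $2$ (a triangle with vertices $1,2,3$) whose first edge $(1,2)$ has colour $x$, whose base $(1,3)$ has colour $y$, and whose second edge $(2,3)$ has colour $z$, where $b$ = blue and $u$ = uncoloured. The suboperad generated by a set is the smallest suboperad containing it. *)

theory Defs
  imports Main
begin

text \<open>A BNC is encoded as a triple (n, B, R): its size n, its set B of blue arcs
and its set R of red arcs. Arcs are pairs (i,j) with 1 <= i < j <= n+1.\<close>

type_synonym arc = "nat \<times> nat"
type_synonym bnc = "nat \<times> arc set \<times> arc set"

definition bnc_size :: "bnc \<Rightarrow> nat" where "bnc_size x = fst x"
definition blue :: "bnc \<Rightarrow> arc set" where "blue x = fst (snd x)"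
definition red :: "bnc \<Rightarrow> arc set" where "red x = snd (snd x)"

definition is_arc :: "nat \<Rightarrow> arc \<Rightarrow> bool" where
  "is_arc n a \<longleftrightarrow> 1 \<le> fst a \<and> fst a < snd a \<and> snd a \<le> n + 1"

definition crossing :: "arc \<Rightarrow> arc \<Rightarrow> bool" where
  "crossing a b \<longleftrightarrow> (case a of (i,j) \<Rightarrow> case b of (k,l) \<Rightarrow>
      (i < k \<and> k < j \<and> j < l) \<or> (k < i \<and> i < l \<and> l < j))"

definition is_diagonal :: "nat \<Rightarrow> arc \<Rightarrow> bool" where
  "is_diagonal n a \<longleftrightarrow> is_arc n a \<and> snd a \<noteq> fst a + 1 \<and> a \<noteq> (1, n + 1)"

text \<open>The elements of CNCB (not needed for the statement, recorded for documentation).\<close>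
definition is_bnc :: "bnc \<Rightarrow> bool" where
  "is_bnc x \<longleftrightarrow> bnc_size x \<ge> 1 \<and>
     (bnc_size x = 1 \<longrightarrow> x = (1, {(1,2)}, {})) \<and>
     (\<forall>a\<in>blue x \<union> red x. is_arc (bnc_size x) a) \<and>
     blue x \<inter> red x = {} \<and>
     (\<forall>a\<in>red x. is_diagonal (bnc_size x) a) \<and>
     (\<forall>a\<in>blue x \<union> red x. \<forall>b\<in>blue x \<union> red x. \<not> crossing a b)"

definition bnc_unit :: bnc where "bnc_unit = (1, {(1,2)}, {})"

text \<open>Partial composition C o_i D (glue the base of D on the i-th edge of C).\<close>
definition bnc_comp :: "bnc \<Rightarrow> nat \<Rightarrow> bnc \<Rightarrow> bnc" where
  "bnc_comp C i D =
    (let n = bnc_size C; m = bnc_size D;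
         \<sigma> = (\<lambda>v. if v \<le> i then v else v + m - 1);
         \<sigma>a = (\<lambda>(a,b). (\<sigma> a, \<sigma> b));
         sh = (\<lambda>(a,b). (a + i - 1, b + i - 1));
         e = (i, i + m);
         eC = (i, i + 1); bD = (1, m + 1);
         Bn = ((\<sigma>a ` blue C \<union> sh ` blue D) - {e}) \<union>
              (if eC \<in> blue C \<and> bD \<in> blue D then {e} else {});
         Rn = ((\<sigma>a ` red C \<union> sh ` red D) - {e}) \<union>
              (if eC \<notin> blue C \<union> red C \<and> bD \<notin> blue D \<union> red D then {e} else {})
     in (n + m - 1, Bn, Rn))"

text \<open>T_xyz: first edge (1,2) colour x, base (1,3) colour y, second edge (2,3) colour z.\<close>
definition gen_p :: bnc where "gen_p = (2, {(1,2), (1,3)}, {})"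
definition gen_c :: bnc where "gen_c = (2, {(1,2)}, {})"

inductive_set generated_O :: "bnc set" where
  unit: "bnc_unit \<in> generated_O"
| p: "gen_p \<in> generated_O"
| c: "gen_c \<in> generated_O"
| comp: "x \<in> generated_O \<Longrightarrow> y \<in> generated_O \<Longrightarrow> 1 \<le> i \<Longrightarrow> i \<le> bnc_size x
          \<Longrightarrow> bnc_comp x i y \<in> generated_O"

datatype gen = P | C

datatype ftree = Leaf | Node gen ftree ftree

fun arity :: "ftree \<Rightarrow> nat" where
  "arity Leaf = 1"
| "arity (Node g l r) = arity l + arity r"

fun graft :: "ftree \<Rightarrow> nat \<Rightarrow> ftree \<Rightarrow> ftree" where
  "graft Leaf i s = (if i = 1 then s else Leaf)"
| "graft (Node g l r) i s =
     (if i \<le> arity l then Node g (graft l i s) r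
      else Node g l (graft r (i - arity l) s))"

definition tp :: ftree where "tp = Node P Leaf Leaf"
definition tc :: ftree where "tc = Node C Leaf Leaf"

inductive base_rel :: "ftree \<Rightarrow> ftree \<Rightarrow> bool" where
  r1: "base_rel (graft (graft tc 2 tp) 2 tc) (graft (graft tc 1 tc) 2 tp)"
| r2: "base_rel (graft (graft tp 2 tp) 2 tc) (graft (graft tp 1 tc) 2 tp)"

inductive fcong :: "ftree \<Rightarrow> ftree \<Rightarrow> bool" where
  base: "base_rel t t' \<Longrightarrow> fcong t t'"
| refl: "fcong t t"
| sym: "fcong t t' \<Longrightarrow> fcong t' t"
| trans: "fcong t t' \<Longrightarrow> fcong t' t'' \<Longrightarrow> fcong t t''"
| comp: "fcong t t' \<Longrightarrow> fcong s s' \<Longrightarrow> 1 \<le> i \<Longrightarrow> i \<le> arity t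
          \<Longrightarrow> fcong (graft t i s) (graft t' i s')"

fun gen_val :: "gen \<Rightarrow> bnc" where
  "gen_val P = gen_p"
| "gen_val C = gen_c"

fun eval :: "ftree \<Rightarrow> bnc" where
  "eval Leaf = bnc_unit"
| "eval (Node g l r) = bnc_comp (bnc_comp (gen_val g) 2 (eval r)) 1 (eval l)"

end

theory Submission
  imports Defs
begin


lemma arity_pos: "1 \<le> arity t" by (induction t) auto

lemma arity_graft: "1 \<le> i \<Longrightarrow> i \<le> arity t \<Longrightarrow> arity (graft t i s) = arity t + arity s - 1"
  using arity_pos[of s] by (induction t arbitrary: i) auto

fun AB :: "ftree \<Rightarrow> nat \<Rightarrow> bool \<Rightarrow> arc set" where
  "AB Leaf k rt = (if rt then {} else {(k, k+1)})"
| "AB (Node g l r) k rt = AB l k False \<union> AB r (k + arity l) True \<union>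
     (if \<not> rt \<and> g = P then {(k, k + arity l + arity r)} else {})"

fun AR :: "ftree \<Rightarrow> nat \<Rightarrow> bool \<Rightarrow> arc set" where
  "AR Leaf k rt = {}"
| "AR (Node g l r) k rt = AR l k False \<union> AR r (k + arity l) True \<union>
     (if rt \<and> g = C then {(k, k + arity l + arity r)} else {})"

lemma AB_bounds: "(x,y) \<in> AB t k rt \<Longrightarrow> k \<le> x \<and> x < y \<and> y \<le> k + arity t"
proof (induction t arbitrary: k rt)
  case Leaf thus ?case by (simp split: if_splits)
next
  case (Node g l r)
  have "1 \<le> arity l" "1 \<le> arity r" by (rule arity_pos)+
  from Node.prems have "(x,y) \<in> AB l k False \<or> (x,y) \<in> AB r (k + arity l) True \<or> (x,y) = (k, k + arity l + arity r)"
    by (auto split: if_splits)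
  thus ?case using Node.IH[of k False] Node.IH[of "k + arity l" True] \<open>1 \<le> arity l\<close> \<open>1 \<le> arity r\<close>
    by auto
qed

lemma AR_bounds: "(x,y) \<in> AR t k rt \<Longrightarrow> k \<le> x \<and> x < y \<and> y \<le> k + arity t"
proof (induction t arbitrary: k rt)
  case Leaf thus ?case by (simp split: if_splits)
next
  case (Node g l r)
  have "1 \<le> arity l" "1 \<le> arity r" by (rule arity_pos)+
  from Node.prems have "(x,y) \<in> AR l k False \<or> (x,y) \<in> AR r (k + arity l) True \<or> (x,y) = (k, k + arity l + arity r)"
    by (auto split: if_splits)
  thus ?case using Node.IH[of k False] Node.IH[of "k + arity l" True] \<open>1 \<le> arity l\<close> \<open>1 \<le> arity r\<close>
    by auto
qed

lemma AB_shift: "(\<lambda>(x,y). (x+d, y+d)) ` AB t k rt = AB t (k+d) rt"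
  by (induction t arbitrary: k rt) (auto simp: image_Un algebra_simps)

lemma AR_shift: "(\<lambda>(x,y). (x+d, y+d)) ` AR t k rt = AR t (k+d) rt"
  by (induction t arbitrary: k rt) (auto simp: image_Un algebra_simps)


definition sig :: "nat \<Rightarrow> nat \<Rightarrow> nat \<Rightarrow> nat" where
  "sig c m v = (if v \<le> c then v else v + m - 1)"
definition siga :: "nat \<Rightarrow> nat \<Rightarrow> arc \<Rightarrow> arc" where
  "siga c m = (\<lambda>(x,y). (sig c m x, sig c m y))"

lemma siga_low: "\<forall>(x,y)\<in>A. x < y \<and> y \<le> c \<Longrightarrow> siga c m ` A = A"
proof -
  assume a: "\<forall>(x,y)\<in>A. x < y \<and> y \<le> c"
  have "siga c m ` A = id ` A"
    by (rule image_cong) (use a in \<open>auto simp: siga_def sig_def\<close>)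
  thus ?thesis by simp
qed

lemma siga_high: "\<forall>(x,y)\<in>A. c < x \<and> x < y \<Longrightarrow> m \<ge> 1 \<Longrightarrow> siga c m ` A = (\<lambda>(x,y). (x+(m-1), y+(m-1))) ` A"
  by (rule image_cong) (auto simp: siga_def sig_def)

lemma graft_AB:
  assumes "1 \<le> i" "i \<le> arity t"
  shows "AB (graft t i s) k rt = (siga (k+i-1) (arity s) ` AB t k rt - {(k+i-1, k+i-1+arity s)})
     \<union> (if (k+i-1, k+i) \<in> AB t k rt then AB s (k+i-1) False else AB s (k+i-1) True)"
  using assms
proof (induction t arbitrary: i k rt)
  case Leaf
  then have "i = 1" by simp
  then show ?case using arity_pos[of s] by (auto simp: siga_def sig_def)
next
  case (Node g l r)
  define a where "a = arity l"
  define b where "b = arity r"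
  define m where "m = arity s"
  have m1: "m \<ge> 1" "b \<ge> 1" "a \<ge> 1" using arity_pos m_def a_def b_def by auto
  show ?case
  proof (cases "i \<le> a")
    case True
    have IH: "AB (graft l i s) k False = (siga (k+i-1) m ` AB l k False - {(k+i-1, k+i-1+m)})
     \<union> (if (k+i-1, k+i) \<in> AB l k False then AB s (k+i-1) False else AB s (k+i-1) True)"
      using Node.IH(1)[of i k False] Node.prems True a_def m_def by simp
    have hr: "\<forall>(x,y)\<in>AB r (k+a) True. k+i-1 < x \<and> x < y" using AB_bounds[of _ _ r "k+a" True] True m1 by fastforce
    have sr: "siga (k+i-1) m ` AB r (k+a) True = AB r (k+a+(m-1)) True"
      using siga_high[OF hr m1(1)] AB_shift by simp
    have er: "(k+i-1, k+i-1+m) \<notin> AB r (k+a+(m-1)) True" using AB_bounds[of _ _ r "k+a+(m-1)" True] True m1 by fastforce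
    have ed: "(k+i-1, k+i) \<notin> AB r (k+a) True" using hr by auto
    have ag: "arity (graft l i s) = a + m - 1" using arity_graft[of i l s] Node.prems True a_def m_def by simp
    have sb: "siga (k+i-1) m (k, k+a+b) = (k, k+(a+m-1)+b)" using True m1 Node.prems by (auto simp: siga_def sig_def)
    have gr: "graft (Node g l r) i s = Node g (graft l i s) r" using True a_def by simp
    show ?thesis
      unfolding gr m_def[symmetric]
      apply (simp only: AB.simps ag IH image_Un sr flip: a_def b_def)
      using er ed sb m1 True Node.prems by (auto simp: algebra_simps)
  next
    case False
    have IH: "AB (graft r (i-a) s) (k+a) True = (siga (k+a+(i-a)-1) m ` AB r (k+a) True - {(k+a+(i-a)-1, k+a+(i-a)-1+m)})
     \<union> (if (k+a+(i-a)-1, k+a+(i-a)) \<in> AB r (k+a) True then AB s (k+a+(i-a)-1) False else AB s (k+a+(i-a)-1) True)"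
      using Node.IH(2)[of "i-a" "k+a" True] Node.prems False a_def b_def m_def by simp
    have e1: "k+a+(i-a)-1 = k+i-1" "k+a+(i-a) = k+i" using False by auto
    have hl: "\<forall>(x,y)\<in>AB l k False. x < y \<and> y \<le> k+i-1" using AB_bounds[of _ _ l k False] False a_def by fastforce
    have sl: "siga (k+i-1) m ` AB l k False = AB l k False" using siga_low[OF hl] .
    have el: "(k+i-1, k+i-1+m) \<notin> AB l k False" "(k+i-1, k+i) \<notin> AB l k False" using hl m1 False Node.prems by auto
    have ag: "arity (graft r (i-a) s) = b + m - 1" using arity_graft[of "i-a" r s] Node.prems False a_def b_def m_def by simp
    have sb: "siga (k+i-1) m (k, k+a+b) = (k, k+a+(b+m-1))" using False m1 Node.prems a_def b_def by (auto simp: siga_def sig_def)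
    have gr: "graft (Node g l r) i s = Node g l (graft r (i-a) s)" using False a_def by simp
    show ?thesis
      unfolding gr m_def[symmetric]
      apply (simp only: AB.simps ag IH image_Un sl e1 flip: a_def b_def)
      using el sb m1 False Node.prems by (auto simp: algebra_simps)
  qed
qed

lemma graft_AR:
  assumes "1 \<le> i" "i \<le> arity t"
  shows "AR (graft t i s) k rt = (siga (k+i-1) (arity s) ` AR t k rt - {(k+i-1, k+i-1+arity s)})
     \<union> (if (k+i-1, k+i) \<in> AB t k rt then AR s (k+i-1) False else AR s (k+i-1) True)"
  using assms
proof (induction t arbitrary: i k rt)
  case Leaf
  then have "i = 1" by simp
  then show ?case using arity_pos[of s] by (auto simp: siga_def sig_def)
next
  case (Node g l r)
  define a where "a = arity l"
  define b where "b = arity r"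
  define m where "m = arity s"
  have m1: "m \<ge> 1" "b \<ge> 1" "a \<ge> 1" using arity_pos m_def a_def b_def by auto
  show ?case
  proof (cases "i \<le> a")
    case True
    have IH: "AR (graft l i s) k False = (siga (k+i-1) m ` AR l k False - {(k+i-1, k+i-1+m)})
     \<union> (if (k+i-1, k+i) \<in> AB l k False then AR s (k+i-1) False else AR s (k+i-1) True)"
      using Node.IH(1)[of i k False] Node.prems True a_def m_def by simp
    have hr: "\<forall>(x,y)\<in>AB r (k+a) True. k+i-1 < x \<and> x < y" using AB_bounds[of _ _ r "k+a" True] True m1 by fastforce
    have sr: "siga (k+i-1) m ` AB r (k+a) True = AB r (k+a+(m-1)) True"
      using siga_high[OF hr m1(1)] AB_shift by simp
    have er: "(k+i-1, k+i-1+m) \<notin> AB r (k+a+(m-1)) True" using AB_bounds[of _ _ r "k+a+(m-1)" True] True m1 by fastforce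
    have ed: "(k+i-1, k+i) \<notin> AB r (k+a) True" using hr by auto
    have hr2: "\<forall>(x,y)\<in>AR r (k+a) True. k+i-1 < x \<and> x < y" using AR_bounds[of _ _ r "k+a" True] True m1 by fastforce
    have sr2: "siga (k+i-1) m ` AR r (k+a) True = AR r (k+a+(m-1)) True"
      using siga_high[OF hr2 m1(1)] AR_shift by simp
    have er2: "(k+i-1, k+i-1+m) \<notin> AR r (k+a+(m-1)) True" using AR_bounds[of _ _ r "k+a+(m-1)" True] True m1 by fastforce
    have ag: "arity (graft l i s) = a + m - 1" using arity_graft[of i l s] Node.prems True a_def m_def by simp
    have sb: "siga (k+i-1) m (k, k+a+b) = (k, k+(a+m-1)+b)" using True m1 Node.prems by (auto simp: siga_def sig_def)
    have gr: "graft (Node g l r) i s = Node g (graft l i s) r" using True a_def by simp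
    show ?thesis
      unfolding gr m_def[symmetric]
      apply (simp only: AB.simps AR.simps ag IH image_Un sr2 flip: a_def b_def)
      using er2 ed sb m1 True Node.prems by (auto simp: algebra_simps)
  next
    case False
    have IH: "AR (graft r (i-a) s) (k+a) True = (siga (k+a+(i-a)-1) m ` AR r (k+a) True - {(k+a+(i-a)-1, k+a+(i-a)-1+m)})
     \<union> (if (k+a+(i-a)-1, k+a+(i-a)) \<in> AB r (k+a) True then AR s (k+a+(i-a)-1) False else AR s (k+a+(i-a)-1) True)"
      using Node.IH(2)[of "i-a" "k+a" True] Node.prems False a_def b_def m_def by simp
    have e1: "k+a+(i-a)-1 = k+i-1" "k+a+(i-a) = k+i" using False by auto
    have hl: "\<forall>(x,y)\<in>AB l k False. x < y \<and> y \<le> k+i-1" using AB_bounds[of _ _ l k False] False a_def by fastforce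
    have sl: "siga (k+i-1) m ` AB l k False = AB l k False" using siga_low[OF hl] .
    have el: "(k+i-1, k+i-1+m) \<notin> AB l k False" "(k+i-1, k+i) \<notin> AB l k False" using hl m1 False Node.prems by auto
    have hl2: "\<forall>(x,y)\<in>AR l k False. x < y \<and> y \<le> k+i-1" using AR_bounds[of _ _ l k False] False a_def by fastforce
    have sl2: "siga (k+i-1) m ` AR l k False = AR l k False" using siga_low[OF hl2] .
    have el2: "(k+i-1, k+i-1+m) \<notin> AR l k False" using hl2 m1 False Node.prems by auto
    have ag: "arity (graft r (i-a) s) = b + m - 1" using arity_graft[of "i-a" r s] Node.prems False a_def b_def m_def by simp
    have sb: "siga (k+i-1) m (k, k+a+b) = (k, k+a+(b+m-1))" using False m1 Node.prems a_def b_def by (auto simp: siga_def sig_def)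
    have gr: "graft (Node g l r) i s = Node g l (graft r (i-a) s)" using False a_def by simp
    show ?thesis
      unfolding gr m_def[symmetric]
      apply (simp only: AB.simps AR.simps ag IH image_Un sl2 e1 flip: a_def b_def)
      using el el2 sb m1 False Node.prems by (auto simp: algebra_simps)
  qed
qed




fun lbt :: "ftree \<Rightarrow> bool" where
  "lbt Leaf = True" | "lbt (Node g l r) = (g = P)"
fun rrt :: "ftree \<Rightarrow> bool" where
  "rrt Leaf = False" | "rrt (Node g l r) = (g = C)"

lemma rrt_lbt: "rrt t \<longleftrightarrow> \<not> lbt t"
  by (cases t) (auto, metis gen.exhaust)

lemma base_notin_ABT: "(k, k + arity t) \<notin> AB t k True"
proof (cases t)
  case (Node g l r)
  show ?thesis using Node AB_bounds[of k "k + arity t" l k False] AB_bounds[of k "k + arity t" r "k + arity l" True] arity_pos[of r] arity_pos[of l]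
    by auto
qed simp

lemma AB_F: "AB t k False = AB t k True \<union> (if lbt t then {(k, k + arity t)} else {})"
  by (cases t) auto

lemma base_notin_ARF: "(k, k + arity t) \<notin> AR t k False"
proof (cases t)
  case (Node g l r)
  show ?thesis using Node AR_bounds[of k "k + arity t" l k False] AR_bounds[of k "k + arity t" r "k + arity l" True] arity_pos[of r] arity_pos[of l]
    by auto
qed simp

lemma AR_T: "AR t k True = AR t k False \<union> (if rrt t then {(k, k + arity t)} else {})"
  by (cases t) auto

lemma edge_notin_AR: "(x, Suc x) \<notin> AR t k rt"
proof (induction t arbitrary: k rt)
  case (Node g l r)
  thus ?case using arity_pos[of l] arity_pos[of r] by auto
qed simp

definition E :: "ftree \<Rightarrow> bnc" where
  "E t = (arity t, AB t 1 False, AR t 1 False)"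


lemma comp_eq: "bnc_comp (n, B1, R1) i (m, B2, R2) = (n+m-1,
   ((siga i m ` B1 \<union> (\<lambda>(a,b). (a + i - 1, b + i - 1)) ` B2) - {(i,i+m)}) \<union>
      (if (i,i+1) \<in> B1 \<and> (1,m+1) \<in> B2 then {(i,i+m)} else {}),
   ((siga i m ` R1 \<union> (\<lambda>(a,b). (a + i - 1, b + i - 1)) ` R2) - {(i,i+m)}) \<union>
      (if (i,i+1) \<notin> B1 \<union> R1 \<and> (1,m+1) \<notin> B2 \<union> R2 then {(i,i+m)} else {}))"
  by (simp add: bnc_comp_def Let_def bnc_size_def blue_def red_def siga_def sig_def)

lemma sh_eq: "1 \<le> (i::nat) \<Longrightarrow> (\<lambda>(a,b). (a + i - 1, b + i - 1)) ` A = (\<lambda>(x,y). (x + (i-1), y + (i-1))) ` A"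
  by (rule image_cong) (auto split: prod.splits)

lemma comp_E:
  assumes i: "1 \<le> i" "i \<le> arity t"
  shows "bnc_comp (E t) i (E s) = E (graft t i s)"
proof -
  define m where "m = arity s"
  have m1: "m \<ge> 1" using arity_pos m_def by auto
  have shB: "(\<lambda>(a,b). (a + i - 1, b + i - 1)) ` AB s 1 False = AB s i False"
    using sh_eq[OF i(1)] AB_shift[of "i-1" s 1 False] i by simp
  have shR: "(\<lambda>(a,b). (a + i - 1, b + i - 1)) ` AR s 1 False = AR s i False"
    using sh_eq[OF i(1)] AR_shift[of "i-1" s 1 False] i by simp
  have gB: "AB (graft t i s) 1 False = (siga i m ` AB t 1 False - {(i, i+m)})
     \<union> (if (i, i+1) \<in> AB t 1 False then AB s i False else AB s i True)"
    using graft_AB[OF i, of s 1 False] m_def by simp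
  have gR: "AR (graft t i s) 1 False = (siga i m ` AR t 1 False - {(i, i+m)})
     \<union> (if (i, i+1) \<in> AB t 1 False then AR s i False else AR s i True)"
    using graft_AR[OF i, of s 1 False] m_def by simp
  have sF: "AB s i False = AB s i True \<union> (if lbt s then {(i, i+m)} else {})" "(i,i+m) \<notin> AB s i True"
    using AB_F[of s i] base_notin_ABT[of i s] m_def by auto
  have bD: "(1, m+1) \<in> AB s 1 False \<longleftrightarrow> lbt s" "(1,m+1) \<notin> AR s 1 False"
    using AB_F[of s 1] base_notin_ABT[of 1 s] base_notin_ARF[of 1 s] m_def by (auto simp: add.commute)
  have eC: "(i, i+1) \<notin> AR t 1 False" using edge_notin_AR[of i t 1 False] by simp
  have sT: "AR s i True = AR s i False \<union> (if rrt s then {(i, i+m)} else {})" "(i,i+m) \<notin> AR s i False"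
    using AR_T[of s i] base_notin_ARF[of i s] m_def by auto
  have rl: "rrt s \<longleftrightarrow> \<not> lbt s" by (rule rrt_lbt)
  have ar: "arity (graft t i s) = arity t + m - 1" using arity_graft[OF i] m_def by simp
  show ?thesis
    unfolding E_def comp_eq m_def[symmetric] ar shB shR gB gR
    using sF bD eC sT rl by auto
qed

lemma E_Leaf: "E Leaf = bnc_unit" by (simp add: E_def bnc_unit_def)
lemma E_gen: "gen_val g = E (Node g Leaf Leaf)"
  by (cases g) (auto simp: E_def gen_p_def gen_c_def)

lemma eval_E: "eval t = E t"
proof (induction t)
  case Leaf thus ?case by (simp add: E_Leaf)
next
  case (Node g l r)
  have "eval (Node g l r) = bnc_comp (bnc_comp (E (Node g Leaf Leaf)) 2 (E r)) 1 (E l)"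
    using Node by (simp add: E_gen)
  also have "\<dots> = bnc_comp (E (graft (Node g Leaf Leaf) 2 r)) 1 (E l)"
    by (subst comp_E) auto
  also have "\<dots> = E (graft (graft (Node g Leaf Leaf) 2 r) 1 l)"
    by (subst comp_E) (auto simp: arity_pos)
  also have "graft (graft (Node g Leaf Leaf) 2 r) 1 l = Node g l r" by simp
  finally show ?case .
qed




lemma RS: "(x, k + arity t) \<in> AB t k rt \<Longrightarrow> x = k \<and> \<not> rt"
proof (induction t arbitrary: k rt x)
  case Leaf thus ?case by (auto split: if_splits)
next
  case (Node g l r)
  have "1 \<le> arity l" "1 \<le> arity r" by (rule arity_pos)+
  from Node.prems have "(x, k + arity l + arity r) \<in> AB l k False \<or> (x, (k + arity l) + arity r) \<in> AB r (k + arity l) True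
     \<or> (\<not> rt \<and> g = P \<and> x = k)"
    by (auto simp: add.assoc split: if_splits)
  then show ?case
    using AB_bounds[of x "k + arity l + arity r" l k False] Node.IH(2)[of x "k + arity l" True]
      \<open>1 \<le> arity r\<close> by auto
qed

fun isPC :: "ftree \<Rightarrow> bool" where
  "isPC (Node P (Node C y z) w) = True"
| "isPC _ = False"

fun nf :: "ftree \<Rightarrow> bool" where
  "nf Leaf = True"
| "nf (Node g l r) = (nf l \<and> nf r \<and> \<not> isPC r)"

lemma spine:
  assumes "nf u" "\<not> isPC u" "k0 < p" "p < K" "K < p + arity u"
    "AB u p True \<subseteq> SB" "AR u p True \<subseteq> SR"
    "\<forall>q \<in> SB \<union> SR. \<not> crossing q (k0, K)"
    "\<forall>x. (x, K) \<in> SB \<longrightarrow> x \<le> k0"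
  shows False
  using assms
proof (induction u arbitrary: p)
  case Leaf thus ?case by simp
next
  case (Node g u1 u2)
  show ?case
  proof (cases g)
    case C
    have "(p, p + arity (Node g u1 u2)) \<in> SR" using Node.prems(7) C by (auto simp: add.assoc)
    thus False using Node.prems(3,4,5,8) by (auto simp: crossing_def)
  next
    case P
    have nC: "lbt u1" using Node.prems(2) P by (cases u1) (auto, metis gen.exhaust isPC.simps(1))
    have "(p, p + arity u1) \<in> AB u1 p False" using AB_F[of u1 p] nC by simp
    hence inSB: "(p, p + arity u1) \<in> SB" using Node.prems(6) by auto
    hence "\<not> crossing (p, p + arity u1) (k0, K)" using Node.prems(8) by auto
    hence le: "p + arity u1 \<le> K" using Node.prems(3,4) by (auto simp: crossing_def)
    show False
    proof (cases "p + arity u1 = K")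
      case True thus False using inSB Node.prems(3,9) by auto
    next
      case False
      show False
      proof (rule Node.IH(2)[of "p + arity u1"])
        show "nf u2" "\<not> isPC u2" using Node.prems(1) by auto
        show "k0 < p + arity u1" using Node.prems(3) by simp
        show "p + arity u1 < K" using le False by simp
        show "K < p + arity u1 + arity u2" using Node.prems(5) by simp
        show "AB u2 (p + arity u1) True \<subseteq> SB" "AR u2 (p + arity u1) True \<subseteq> SR"
          using Node.prems(6,7) by auto
      qed (use Node.prems(8,9) in auto)
    qed
  qed
qed




lemma split_AB:
  "AB l k False = {q \<in> AB (Node g l r) k rt. snd q \<le> k + arity l}"
  "AB r (k + arity l) True = {q \<in> AB (Node g l r) k rt. k + arity l \<le> fst q}"
  using AB_bounds[of _ _ l k False] AB_bounds[of _ _ r "k + arity l" True] arity_pos[of l] arity_pos[of r]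
  by (fastforce split: if_splits)+

lemma split_AR:
  "AR l k False = {q \<in> AR (Node g l r) k rt. snd q \<le> k + arity l}"
  "AR r (k + arity l) True = {q \<in> AR (Node g l r) k rt. k + arity l \<le> fst q}"
  using AR_bounds[of _ _ l k False] AR_bounds[of _ _ r "k + arity l" True] arity_pos[of l] arity_pos[of r]
  by (fastforce split: if_splits)+

lemma base_in:
  "(k, k + arity l + arity r) \<in> AB (Node g l r) k rt \<longleftrightarrow> \<not> rt \<and> g = P"
  "(k, k + arity l + arity r) \<in> AR (Node g l r) k rt \<longleftrightarrow> rt \<and> g = C"
  using AB_bounds[of k "k + arity l + arity r" l k False] AB_bounds[of k "k + arity l + arity r" r "k + arity l" True]
    AR_bounds[of k "k + arity l + arity r" l k False] AR_bounds[of k "k + arity l + arity r" r "k + arity l" True]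
    arity_pos[of l] arity_pos[of r]
  by auto

lemma contra:
  assumes nf: "nf (Node g l r)" and lt: "arity l < arity l'"
    and ar: "arity l + arity r = arity l' + arity r'"
    and eB: "AB (Node g l r) k rt = AB (Node g' l' r') k rt"
    and eR: "AR (Node g l r) k rt = AR (Node g' l' r') k rt"
  shows False
proof -
  define K where "K = k + arity l'"
  define SB where "SB = AB (Node g' l' r') k rt"
  define SR where "SR = AR (Node g' l' r') k rt"
  have p1: "1 \<le> arity l" "1 \<le> arity r" "1 \<le> arity l'" "1 \<le> arity r'" by (rule arity_pos)+
  have nc: "\<forall>q \<in> SB \<union> SR. \<not> crossing q (k, K)"
  proof
    fix q assume q: "q \<in> SB \<union> SR"
    obtain x y where xy: "q = (x,y)" by (cases q)
    from q have "(x,y) \<in> AB l' k False \<or> (x,y) \<in> AR l' k False \<or> (x,y) \<in> AB r' K True \<or> (x,y) \<in> AR r' K True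
       \<or> (x,y) = (k, k + arity l' + arity r')"
      unfolding SB_def SR_def xy K_def by (auto split: if_splits)
    then have "(k \<le> x \<and> y \<le> K) \<or> K \<le> x \<or> x = k"
      using AB_bounds[of x y l' k False] AR_bounds[of x y l' k False]
        AB_bounds[of x y r' K True] AR_bounds[of x y r' K True] K_def by auto
    then show "\<not> crossing q (k, K)" unfolding xy crossing_def by auto
  qed
  have ks: "\<forall>x. (x, K) \<in> SB \<longrightarrow> x \<le> k"
  proof (intro allI impI)
    fix x assume "(x, K) \<in> SB"
    then have "(x, k + arity l') \<in> AB l' k False \<or> (x, K) \<in> AB r' K True \<or> (x,K) = (k, k + arity l' + arity r')"
      unfolding SB_def K_def by (auto split: if_splits)
    then show "x \<le> k"
      using RS[of x k l' False] AB_bounds[of x K r' K True] p1 K_def by auto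
  qed
  show False
  proof (rule spine[of r k "k + arity l" K SB SR])
    show "nf r" "\<not> isPC r" using nf by auto
    show "k < k + arity l" using p1 by simp
    show "k + arity l < K" using lt K_def by simp
    show "K < k + arity l + arity r" using K_def ar p1 by simp
    show "AB r (k + arity l) True \<subseteq> SB" unfolding SB_def eB[symmetric] by auto
    show "AR r (k + arity l) True \<subseteq> SR" unfolding SR_def eR[symmetric] by auto
  qed (use nc ks in auto)
qed

lemma uniq:
  "nf t \<Longrightarrow> nf t' \<Longrightarrow> arity t = arity t' \<Longrightarrow> AB t k rt = AB t' k rt \<Longrightarrow> AR t k rt = AR t' k rt \<Longrightarrow> t = t'"
proof (induction t arbitrary: t' k rt)
  case Leaf
  then show ?case
  proof (cases t')
    case (Node g l r)
    then show ?thesis using Leaf.prems(3) arity_pos[of l] arity_pos[of r] by simp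
  qed simp
next
  case (Node g l r)
  show ?case
  proof (cases t')
    case Leaf
    then show ?thesis using Node.prems(3) arity_pos[of l] arity_pos[of r] by simp
  next
    case (Node g' l' r')
    note t' = Node
    have aeq: "arity l = arity l'"
    proof (rule ccontr)
      assume "arity l \<noteq> arity l'"
      then consider "arity l < arity l'" | "arity l' < arity l" by linarith
      then show False
      proof cases
        case 1
        then show False using contra[of g l r l' r' k rt g'] Node.prems t' by auto
      next
        case 2
        then show False using contra[of g' l' r' l r k rt g] Node.prems t' by auto
      qed
    qed
    have req: "arity r = arity r'" using Node.prems(3) t' aeq by simp
    have geq: "g = g'"
    proof (cases rt)
      case True
      have "(k, k + arity l + arity r) \<in> AR (Node g l r) k rt \<longleftrightarrow> (k, k + arity l' + arity r') \<in> AR (Node g' l' r') k rt"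
        using Node.prems(5) t' aeq req by simp
      then show ?thesis using base_in(2)[of k l r g rt] base_in(2)[of k l' r' g' rt] True
        by (cases g; cases g') auto
    next
      case False
      have "(k, k + arity l + arity r) \<in> AB (Node g l r) k rt \<longleftrightarrow> (k, k + arity l' + arity r') \<in> AB (Node g' l' r') k rt"
        using Node.prems(4) t' aeq req by simp
      then show ?thesis using base_in(1)[of k l r g rt] base_in(1)[of k l' r' g' rt] False
        by (cases g; cases g') auto
    qed
    have "l = l'"
    proof (rule Node.IH(1))
      show "nf l" "nf l'" using Node.prems t' by auto
      show "arity l = arity l'" by fact
      show "AB l k False = AB l' k False" using split_AB(1)[of l k g r rt] split_AB(1)[of l' k g' r' rt] Node.prems(4) t' aeq by (simp del: AB.simps)
      show "AR l k False = AR l' k False" using split_AR(1)[of l k g r rt] split_AR(1)[of l' k g' r' rt] Node.prems(5) t' aeq by (simp del: AR.simps)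
    qed
    moreover have "r = r'"
    proof (rule Node.IH(2))
      show "nf r" "nf r'" using Node.prems t' by auto
      show "arity r = arity r'" by fact
      show "AB r (k + arity l) True = AB r' (k + arity l) True" using split_AB(2)[of r k l g rt] split_AB(2)[of r' k l' g' rt] Node.prems(4) t' aeq by (simp del: AB.simps)
      show "AR r (k + arity l) True = AR r' (k + arity l) True" using split_AR(2)[of r k l g rt] split_AR(2)[of r' k l' g' rt] Node.prems(5) t' aeq by (simp del: AR.simps)
    qed
    ultimately show ?thesis using t' geq by simp
  qed
qed




lemma fcong_Node: "fcong l l' \<Longrightarrow> fcong r r' \<Longrightarrow> fcong (Node g l r) (Node g l' r')"
proof -
  assume l: "fcong l l'" and r: "fcong r r'"
  have "fcong (graft (Node g Leaf Leaf) 2 r) (graft (Node g Leaf Leaf) 2 r')"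
    by (rule fcong.comp[OF fcong.refl r]) auto
  hence "fcong (graft (graft (Node g Leaf Leaf) 2 r) 1 l) (graft (graft (Node g Leaf Leaf) 2 r') 1 l')"
    by (rule fcong.comp[OF _ l]) (auto simp: arity_pos)
  thus ?thesis by simp
qed

lemma rot: "fcong (Node g x (Node P (Node C y z) w)) (Node g (Node C x (Node P y z)) w)"
proof -
  have b: "fcong (Node g Leaf (Node P (Node C Leaf Leaf) Leaf)) (Node g (Node C Leaf (Node P Leaf Leaf)) Leaf)"
  proof (cases g)
    case P
    have "base_rel (graft (graft tp 2 tp) 2 tc) (graft (graft tp 1 tc) 2 tp)" by (rule base_rel.r2)
    then show ?thesis using P by (auto simp: tp_def tc_def intro: fcong.base)
  next
    case C
    have "base_rel (graft (graft tc 2 tp) 2 tc) (graft (graft tc 1 tc) 2 tp)" by (rule base_rel.r1)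
    then show ?thesis using C by (auto simp: tp_def tc_def intro: fcong.base)
  qed
  have 1: "fcong (graft (Node g Leaf (Node P (Node C Leaf Leaf) Leaf)) 4 w) (graft (Node g (Node C Leaf (Node P Leaf Leaf)) Leaf) 4 w)"
    by (rule fcong.comp[OF b fcong.refl]) auto
  have 2: "fcong (graft (graft (Node g Leaf (Node P (Node C Leaf Leaf) Leaf)) 4 w) 3 z) (graft (graft (Node g (Node C Leaf (Node P Leaf Leaf)) Leaf) 4 w) 3 z)"
    by (rule fcong.comp[OF 1 fcong.refl]) auto
  have 3: "fcong (graft (graft (graft (Node g Leaf (Node P (Node C Leaf Leaf) Leaf)) 4 w) 3 z) 2 y) (graft (graft (graft (Node g (Node C Leaf (Node P Leaf Leaf)) Leaf) 4 w) 3 z) 2 y)"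
    by (rule fcong.comp[OF 2 fcong.refl]) auto
  have 4: "fcong (graft (graft (graft (graft (Node g Leaf (Node P (Node C Leaf Leaf) Leaf)) 4 w) 3 z) 2 y) 1 x) (graft (graft (graft (graft (Node g (Node C Leaf (Node P Leaf Leaf)) Leaf) 4 w) 3 z) 2 y) 1 x)"
    by (rule fcong.comp[OF 3 fcong.refl]) auto
  then show ?thesis by (simp add: arity_pos)
qed

fun mu :: "ftree \<Rightarrow> nat" where
  "mu Leaf = 0"
| "mu (Node g l r) = mu l + mu r + arity r"

lemma isPC_cases: "isPC r \<Longrightarrow> \<exists>y z w. r = Node P (Node C y z) w"
  by (induction r rule: isPC.induct) auto

lemma nf_exists: "\<exists>t'. fcong t t' \<and> nf t' \<and> mu t' \<le> mu t \<and> arity t' = arity t"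
proof (induction "mu t" arbitrary: t rule: less_induct)
  case less
  show ?case
  proof (cases t)
    case Leaf
    have "fcong t t \<and> nf t \<and> mu t \<le> mu t \<and> arity t = arity t" using Leaf fcong.refl by simp
    thus ?thesis by blast
  next
    case (Node g l r)
    have ml: "mu l < mu t" and mr: "mu r < mu t" using Node arity_pos[of r] by simp_all
    obtain l' where l': "fcong l l'" "nf l'" "mu l' \<le> mu l" "arity l' = arity l"
      using less(1)[OF ml] by blast
    obtain r' where r': "fcong r r'" "nf r'" "mu r' \<le> mu r" "arity r' = arity r"
      using less(1)[OF mr] by blast
    define t1 where "t1 = Node g l' r'"
    have f1: "fcong t t1" unfolding t1_def Node by (rule fcong_Node[OF l'(1) r'(1)])
    have m1: "mu t1 \<le> mu t" "arity t1 = arity t" unfolding t1_def Node using l' r' by auto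
    show ?thesis
    proof (cases "isPC r'")
      case False
      then have "nf t1" using l' r' t1_def by simp
      then show ?thesis using f1 m1 by blast
    next
      case True
      then obtain y z w where rw: "r' = Node P (Node C y z) w" using isPC_cases by blast
      define t2 where "t2 = Node g (Node C l' (Node P y z)) w"
      have f2: "fcong t1 t2" unfolding t1_def t2_def rw by (rule rot)
      have m2: "mu t2 < mu t1" "arity t2 = arity t1" unfolding t1_def t2_def rw using arity_pos[of w] by auto
      have "mu t2 < mu t" using m1 m2 by simp
      then obtain t3 where t3: "fcong t2 t3" "nf t3" "mu t3 \<le> mu t2" "arity t3 = arity t2"
        using less(1) by blast
      have "fcong t t3" using fcong.trans[OF fcong.trans[OF f1 f2] t3(1)] .
      then show ?thesis using t3 m1 m2 by auto
    qed
  qed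
qed

lemma fcong_eval: "fcong t t' \<Longrightarrow> eval t = eval t'"
proof (induction rule: fcong.induct)
  case (base t t')
  then show ?case
    by (cases rule: base_rel.cases) (auto simp: eval_E E_def tp_def tc_def)
next
  case (comp t t' s s' i)
  have a: "arity t = arity t'" using comp.IH(1) by (simp add: eval_E E_def)
  show ?case using comp comp_E[of i t s] comp_E[of i t' s'] a by (simp add: eval_E)
qed auto




lemma size_eval: "bnc_size (eval t) = arity t" by (simp add: eval_E E_def bnc_size_def)

lemma eval_graft: "1 \<le> i \<Longrightarrow> i \<le> arity t \<Longrightarrow> eval (graft t i s) = bnc_comp (eval t) i (eval s)"
  by (simp add: eval_E comp_E)

lemma eval_in: "eval t \<in> generated_O"
proof (induction t)
  case Leaf thus ?case by (simp add: generated_O.unit)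
next
  case (Node g l r)
  have g: "gen_val g \<in> generated_O" by (cases g) (auto intro: generated_O.p generated_O.c)
  have s2: "bnc_size (gen_val g) = 2" by (cases g) (auto simp: bnc_size_def gen_p_def gen_c_def)
  have x: "bnc_comp (gen_val g) 2 (eval r) \<in> generated_O"
    by (rule generated_O.comp[OF g Node(2)]) (use s2 in auto)
  have "1 \<le> bnc_size (bnc_comp (gen_val g) 2 (eval r))"
    using s2 by (simp add: bnc_comp_def Let_def bnc_size_def)
  then show ?case using generated_O.comp[OF x Node(1), of 1] by simp
qed

lemma in_range: "x \<in> generated_O \<Longrightarrow> x \<in> range eval"
proof (induction rule: generated_O.induct)
  case unit
  have "eval Leaf = bnc_unit" by simp
  thus ?case by (metis rangeI)
next
  case p
  have "eval tp = gen_p" using E_gen[of P] by (simp add: tp_def eval_E)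
  thus ?case by (metis rangeI)
next
  case c
  have "eval tc = gen_c" using E_gen[of C] by (simp add: tc_def eval_E)
  thus ?case by (metis rangeI)
next
  case (comp x y i)
  obtain t s where "x = eval t" "y = eval s" using comp by auto
  moreover have "i \<le> arity t" using comp \<open>x = eval t\<close> size_eval by simp
  ultimately have "bnc_comp x i y = eval (graft t i s)" using eval_graft comp by simp
  thus ?case by (metis rangeI)
qed

lemma eval_fcong: "eval t = eval t' \<Longrightarrow> fcong t t'"
proof -
  assume e: "eval t = eval t'"
  obtain t1 where t1: "fcong t t1" "nf t1" using nf_exists by blast
  obtain t2 where t2: "fcong t' t2" "nf t2" using nf_exists by blast
  have "eval t1 = eval t2" using fcong_eval[OF t1(1)] fcong_eval[OF t2(1)] e by simp
  hence "arity t1 = arity t2" "AB t1 1 False = AB t2 1 False" "AR t1 1 False = AR t2 1 False"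
    by (simp_all add: eval_E E_def)
  hence "t1 = t2" using uniq t1(2) t2(2) by blast
  thus ?thesis using t1(1) fcong.sym[OF t2(1)] fcong.trans by blast
qed

theorem theorem3p12:
  shows "(\<forall>t. bnc_size (eval t) = arity t)
    \<and> (\<forall>t i s. 1 \<le> i \<and> i \<le> arity t \<longrightarrow> eval (graft t i s) = bnc_comp (eval t) i (eval s))
    \<and> range eval = generated_O
    \<and> (\<forall>t t'. eval t = eval t' \<longleftrightarrow> fcong t t')"
  using size_eval eval_graft eval_in in_range eval_fcong fcong_eval by blast


end
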